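(* Let $k \in \mathbb{N}$ and let $\xi, \varepsilon, \varepsilon', d', d$ be positive constants such that $0 < \xi \ll 1/k \ll \varepsilon \ll \varepsilon' \ll d' \ll d \ll 1$. Suppose $G$ is a graph on $n$ vertices, $A_1, B_1, A_2, B_2, \dots, A_k, B_k$ is a partition of $V(G)$ such that $|A_i|, |B_i| \geq n/3k$ for all $1 \leq i \leq k$, and $R$ is an $(\varepsilon,d)$-reduced graph of $G$ on $A_1, B_1, \dots, A_k, B_k$. Let $(a_i)_{i=1}^k$ and $(b_i)_{i=1}^k$ be integers. Suppose that: (i) $R$ contains the Hamilton cycle $A_1 B_1 A_2 B_2 \dots A_k B_k A_1$; (ii) $R$ contains an edge $A_{i_1}A_{j_1}$ for some $i_1 \neq j_1$; (iii) $R$ contains an edge $B_{i_2}B_{j_2}$ for some $i_2 \neq j_2$; (iv) $(A_i, B_i)_G$ is $(\varepsilon,d)$-super-regular for all $1 \leq i \leq k$; (v) $|a_i|, |b_i| < \xi n$ for each $1 \leq i \leq k$; (vi) $\sum_{i=1}^k a_i + \sum_{i=1}^k b_i = 0$; (vii) $|\sum_{i=1}^k a_i| = |\sum_{i=1}^k b_i| \leq \xi n$. Then there exists a partition $A'_1, B'_1, \dots, A'_k, B'_k$ of $V(G)$ such that $|A'_i| = |A_i| + a_i$ and $|B'_i| = |B_i| + b_i$ for each $1 \leq i \leq k$, $R$ is an $(\varepsilon', d')$-reduced graph of $G$ on $A'_1, B'_1, \dots, A'_k, B'_k$, and $(A'_i, B'_i)_G$ is $(\varepsilon', d')$-super-regular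 for each $1 \leq i \leq k$.
   Context: The hierarchy $0 < \xi \ll 1/k \ll \varepsilon \ll \varepsilon' \ll d' \ll d \ll 1$ means the constants are chosen from right to left, each sufficiently small relative to the previously chosen ones. For disjoint $A, B \subseteq V(G)$, $(A,B)_G$ is the bipartite subgraph of $G$ with classes $A, B$ and all edges of $G$ between them; its density is $d(A,B) = e(A,B)/(|A||B|)$. $(A,B)_G$ is $(\varepsilon,d)$-regular if $d(A,B) \geq d$ and $|d(A,B) - d(X,Y)| < \varepsilon$ for all $X \subseteq A$, $Y \subseteq B$ with $|X| \geq \varepsilon|A|$, $|Y| \geq \varepsilon|B|$; it is $(\varepsilon,d)$-super-regular if moreover every vertex of $A$ has at least $d|B|$ neighbours in $B$ and every vertex of $B$ has at least $d|A|$ neighbours in $A$. Given a partition $V_1, \dots, V_m$ of $V(G)$, a graph $R$ is an $(\varepsilon,d)$-reduced graph of $G$ on $V_1,\dots,V_m$ if $V(R) = \{V_1,\dots,V_m\}$ and $(V_i,V_j)_G$ is $(\varepsilon,d)$-regular whenever $V_iV_j \in E(R)$. If $V'_1,\dots,V'_m$ is another partition of $V(G)$, we say $R$ is an $(\varepsilon',d')$-reduced graph of $G$ on $V'_1,\dots,V'_m$ if $(V'_i,V'_j)_G$ is $(\varepsilon',d')$-regular whenever $V_iV_j \in E(R)$ (with $A'_i$ corresponding to $A_i$ and $B'_i$ to $B_i$). *)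

theory Defs
  imports Main "HOL-Library.Disjoint_Sets" Complex_Main
begin

definition simple_graph :: "nat set \<Rightarrow> (nat \<Rightarrow> nat \<Rightarrow> bool) \<Rightarrow> bool" where
  "simple_graph V E \<longleftrightarrow> finite V \<and> (\<forall>x y. E x y \<longrightarrow> x \<in> V \<and> y \<in> V)
     \<and> (\<forall>x y. E x y \<longrightarrow> E y x) \<and> (\<forall>x. \<not> E x x)"

definition e_between :: "(nat \<Rightarrow> nat \<Rightarrow> bool) \<Rightarrow> nat set \<Rightarrow> nat set \<Rightarrow> nat" where
  "e_between E X Y = card {(x, y). x \<in> X \<and> y \<in> Y \<and> E x y}"

definition density :: "(nat \<Rightarrow> nat \<Rightarrow> bool) \<Rightarrow> nat set \<Rightarrow> nat set \<Rightarrow> real" where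
  "density E X Y = real (e_between E X Y) / (real (card X) * real (card Y))"

definition regular_pair :: "real \<Rightarrow> real \<Rightarrow> (nat \<Rightarrow> nat \<Rightarrow> bool) \<Rightarrow> nat set \<Rightarrow> nat set \<Rightarrow> bool" where
  "regular_pair eps d E A B \<longleftrightarrow> density E A B \<ge> d \<and>
     (\<forall>X Y. X \<subseteq> A \<and> Y \<subseteq> B \<and> real (card X) \<ge> eps * real (card A)
            \<and> real (card Y) \<ge> eps * real (card B)
        \<longrightarrow> \<bar>density E A B - density E X Y\<bar> < eps)"

definition super_regular_pair :: "real \<Rightarrow> real \<Rightarrow> (nat \<Rightarrow> nat \<Rightarrow> bool) \<Rightarrow> nat set \<Rightarrow> nat set \<Rightarrow> bool" where
  "super_regular_pair eps d E A B \<longleftrightarrow> regular_pair eps d E A B \<and>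
     (\<forall>x\<in>A. real (card {y\<in>B. E x y}) \<ge> d * real (card B)) \<and>
     (\<forall>y\<in>B. real (card {x\<in>A. E y x}) \<ge> d * real (card A))"

text \<open>Labels of the 2k clusters A_1,B_1,...,A_k,B_k (vertices of the reduced graph).\<close>
datatype cls = ACl nat | BCl nat

definition valid_cls :: "nat \<Rightarrow> cls \<Rightarrow> bool" where
  "valid_cls k c \<longleftrightarrow> (case c of ACl i \<Rightarrow> 1 \<le> i \<and> i \<le> k | BCl i \<Rightarrow> 1 \<le> i \<and> i \<le> k)"

definition is_cls_partition :: "nat \<Rightarrow> nat set \<Rightarrow> (cls \<Rightarrow> nat set) \<Rightarrow> bool" where
  "is_cls_partition k V P \<longleftrightarrow>
     (\<forall>c c'. valid_cls k c \<and> valid_cls k c' \<and> c \<noteq> c' \<longrightarrow> P c \<inter> P c' = {}) \<and>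
     (\<Union>c\<in>{c. valid_cls k c}. P c) = V"

definition cls_graph :: "nat \<Rightarrow> (cls \<Rightarrow> cls \<Rightarrow> bool) \<Rightarrow> bool" where
  "cls_graph k R \<longleftrightarrow> (\<forall>c c'. R c c' \<longrightarrow> valid_cls k c \<and> valid_cls k c')
     \<and> (\<forall>c c'. R c c' \<longrightarrow> R c' c) \<and> (\<forall>c. \<not> R c c)"

definition reduced_graph_on :: "real \<Rightarrow> real \<Rightarrow> (nat \<Rightarrow> nat \<Rightarrow> bool) \<Rightarrow> nat \<Rightarrow> (cls \<Rightarrow> cls \<Rightarrow> bool) \<Rightarrow> (cls \<Rightarrow> nat set) \<Rightarrow> bool" where
  "reduced_graph_on eps d E k R P \<longleftrightarrow>
     (\<forall>c c'. R c c' \<longrightarrow> regular_pair eps d E (P c) (P c'))"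

end

theory Submission
  imports Defs
begin

lemma e_between_sum:
  assumes "finite X" "finite Y"
  shows "e_between E X Y = (\<Sum>x\<in>X. card {y\<in>Y. E x y})"
proof -
  have "{(x, y). x \<in> X \<and> y \<in> Y \<and> E x y} = Sigma X (\<lambda>x. {y\<in>Y. E x y})" by auto
  then show ?thesis unfolding e_between_def using assms by simp
qed

lemma regular_pos:
  assumes "regular_pair eps d E A B" "0 < d"
  shows "card A > 0 \<and> card B > 0"
  using assms unfolding regular_pair_def density_def
  by (cases "card A = 0"; cases "card B = 0") auto

lemma bad_small:
  assumes reg: "regular_pair eps d E A B" and e: "0 < eps" "eps \<le> 1" and d: "0 < d"
  shows "real (card {x\<in>A. real (card {y\<in>B. E x y}) < (d - eps) * real (card B)}) < eps * real (card A)"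
proof (rule ccontr)
  define X where "X = {x\<in>A. real (card {y\<in>B. E x y}) < (d - eps) * real (card B)}"
  assume "\<not> ?thesis"
  hence cX: "real (card X) \<ge> eps * real (card A)" unfolding X_def by simp
  have pos: "card A > 0" "card B > 0" using regular_pos[OF reg d] by auto
  hence fin: "finite A" "finite B" using card_gt_0_iff by blast+
  have XA: "X \<subseteq> A" unfolding X_def by auto
  have "real (card X) > 0" using cX pos e by (smt (verit) mult_pos_pos of_nat_0_less_iff)
  hence Xne: "X \<noteq> {}" "finite X" using fin XA finite_subset by fastforce+
  have "real (card B) \<ge> eps * real (card B)" using e by (intro mult_left_le_one_le) auto
  with reg XA cX have close: "\<bar>density E A B - density E X B\<bar> < eps"
    unfolding regular_pair_def by blast
  have dAB: "density E A B \<ge> d" using reg unfolding regular_pair_def by simp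
  have "real (e_between E X B) = (\<Sum>x\<in>X. real (card {y\<in>B. E x y}))"
    using e_between_sum[OF \<open>finite X\<close> \<open>finite B\<close>] by simp
  also have "\<dots> < (\<Sum>x\<in>X. (d - eps) * real (card B))"
    by (rule sum_strict_mono) (use Xne in \<open>auto simp: X_def\<close>)
  also have "\<dots> = real (card X) * ((d - eps) * real (card B))" by simp
  finally have lt: "real (e_between E X B) < real (card X) * ((d - eps) * real (card B))" .
  have "density E X B < d - eps"
    unfolding density_def using lt pos \<open>real (card X) > 0\<close>
    by (simp add: divide_less_eq mult_ac)
  with close dAB show False by linarith
qed

lemma dens_diff0:
  assumes fin: "finite X" "finite Y" and sub: "X0 \<subseteq> X" "Y0 \<subseteq> Y"
    and pos: "card X0 > 0" "card Y0 > 0"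
  shows "\<bar>density E X Y - density E X0 Y0\<bar>
     \<le> 1 - (real (card X0) * real (card Y0)) / (real (card X) * real (card Y))"
proof -
  define S where "S = {(x, y). x \<in> X \<and> y \<in> Y \<and> E x y}"
  define S0 where "S0 = {(x, y). x \<in> X0 \<and> y \<in> Y0 \<and> E x y}"
  have finS: "finite S" "finite S0" "finite (X \<times> Y)"
    using fin sub by (auto simp: S_def S0_def intro: finite_subset[of _ "X \<times> Y"] finite_subset[of _ "X0 \<times> Y0"] finite_subset)
  have S0S: "S0 \<subseteq> S" using sub by (auto simp: S_def S0_def)
  have "S \<subseteq> S0 \<union> (X \<times> Y - X0 \<times> Y0)" by (auto simp: S_def S0_def)
  hence "card S \<le> card (S0 \<union> (X \<times> Y - X0 \<times> Y0))" using finS by (intro card_mono) auto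
  also have "\<dots> \<le> card S0 + card (X \<times> Y - X0 \<times> Y0)" by (rule card_Un_le)
  also have "card (X \<times> Y - X0 \<times> Y0) = card X * card Y - card X0 * card Y0"
    using sub fin by (subst card_Diff_subset) (auto simp: card_cartesian_product intro: finite_subset)
  finally have up: "card S \<le> card S0 + (card X * card Y - card X0 * card Y0)" .
  have le1: "card X0 * card Y0 \<le> card X * card Y"
    using sub fin by (intro mult_le_mono card_mono) auto
  have up2: "card S + card X0 * card Y0 \<le> card S0 + card X * card Y" using up le1 by linarith
  have "real (card S + card X0 * card Y0) \<le> real (card S0 + card X * card Y)"
    using up2 by (simp only: of_nat_le_iff)
  hence upr: "real (card S) \<le> real (card S0) + real (card X) * real (card Y) - real (card X0) * real (card Y0)"
    by simp
  have lo: "card S0 \<le> card S" using S0S finS by (intro card_mono) auto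
  have "S0 \<subseteq> X0 \<times> Y0" by (auto simp: S0_def)
  hence e0: "card S0 \<le> card X0 * card Y0"
  proof -
    have "finite (X0 \<times> Y0)" using fin sub finite_subset by blast
    hence "card S0 \<le> card (X0 \<times> Y0)" using \<open>S0 \<subseteq> X0 \<times> Y0\<close> by (rule card_mono)
    thus ?thesis by (simp add: card_cartesian_product)
  qed
  have cX: "card X > 0" "card Y > 0" using pos card_mono[OF fin(1) sub(1)] card_mono[OF fin(2) sub(2)] by linarith+
  define x where "x = real (card X)"
  define y where "y = real (card Y)"
  define x0 where "x0 = real (card X0)"
  define y0 where "y0 = real (card Y0)"
  define e where "e = real (card S)"
  define e0 where "e0 = real (card S0)"
  have h: "x > 0" "y > 0" "x0 > 0" "y0 > 0" "e0 \<le> e" "e \<le> e0 + x*y - x0*y0" "e0 \<le> x0*y0"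
     "x0 * y0 \<le> x * y" "e0 \<ge> 0"
    using cX pos lo upr e0 le1 unfolding x_def y_def x0_def y0_def e_def e0_def
    by (auto simp flip: of_nat_mult)
  have dd: "density E X Y = e / (x*y)" "density E X0 Y0 = e0 / (x0*y0)"
    unfolding density_def e_between_def e_def e0_def S_def S0_def x_def y_def x0_def y0_def by auto
  have xy: "x*y > 0" "x0*y0 > 0" using h by auto
  have A: "e/(x*y) - e0/(x0*y0) \<le> 1 - x0*y0/(x*y)"
  proof -
    have "e/(x*y) \<le> (e0 + x*y - x0*y0)/(x*y)" using h xy by (simp add: divide_right_mono)
    also have "\<dots> = e0/(x*y) + 1 - x0*y0/(x*y)" using h by (simp add: add_divide_distrib diff_divide_distrib)
    also have "e0/(x*y) \<le> e0/(x0*y0)" using h xy by (simp add: frac_le)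
    finally show ?thesis by linarith
  qed
  have B: "e0/(x0*y0) - e/(x*y) \<le> 1 - x0*y0/(x*y)"
  proof -
    have "e0/(x0*y0) - e/(x*y) \<le> e0/(x0*y0) - e0/(x*y)" using h xy by (simp add: divide_right_mono)
    also have "\<dots> = (e0/(x0*y0)) * (1 - x0*y0/(x*y))" using h by (simp add: field_simps)
    also have "\<dots> \<le> 1 * (1 - x0*y0/(x*y))"
      using h xy by (intro mult_right_mono) (auto simp: divide_le_eq_1 )
    finally show ?thesis by simp
  qed
  show ?thesis unfolding dd x_def[symmetric] y_def[symmetric] x0_def[symmetric] y0_def[symmetric]
    using A B by linarith
qed

lemma dens_diff:
  assumes fin: "finite X" "finite Y" and sub: "X0 \<subseteq> X" "Y0 \<subseteq> Y"
    and pos: "card X0 > 0" "card Y0 > 0"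
    and cx: "real (card X) \<le> real (card X0) + N1" and cy: "real (card Y) \<le> real (card Y0) + N2"
  shows "\<bar>density E X Y - density E X0 Y0\<bar> \<le> N1 / real (card X0) + N2 / real (card Y0)"
proof -
  define x where "x = real (card X)"
  define y where "y = real (card Y)"
  define x0 where "x0 = real (card X0)"
  define y0 where "y0 = real (card Y0)"
  have le: "x0 \<le> x" "y0 \<le> y" unfolding x_def x0_def y_def y0_def
    using card_mono[OF fin(1) sub(1)] card_mono[OF fin(2) sub(2)] by auto
  have p: "x0 > 0" "y0 > 0" using pos unfolding x0_def y0_def by auto
  have c: "x \<le> x0 + N1" "y \<le> y0 + N2" using cx cy unfolding x_def x0_def y_def y0_def by auto
  have n: "N1 \<ge> 0" "N2 \<ge> 0" using le c by auto
  have "x * y - x0 * y0 = (x - x0) * y + x0 * (y - y0)" by (simp add: algebra_simps)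
  also have "\<dots> \<le> N1 * y + x * N2"
    using le c p n by (intro add_mono mult_mono) auto
  finally have k: "x * y - x0 * y0 \<le> N1 * y + x * N2" .
  have "1 - x0*y0/(x*y) = (x*y - x0*y0)/(x*y)" using p le by (simp add: field_simps)
  also have "\<dots> \<le> (N1 * y + x * N2)/(x*y)" using k p le by (intro divide_right_mono) auto
  also have "\<dots> = N1/x + N2/y" using p le by (simp add: field_simps)
  also have "\<dots> \<le> N1/x0 + N2/y0" using p le n by (intro add_mono divide_left_mono) auto
  finally have "1 - x0*y0/(x*y) \<le> N1/x0 + N2/y0" .
  with dens_diff0[OF fin sub pos, of E] show ?thesis unfolding x_def y_def x0_def y0_def by linarith
qed

lemma perturb:
  assumes reg: "regular_pair eps d E A B"
    and par: "0 < eps" "eps \<le> eps' / 2" "eps' \<le> 1" "0 < d" "d' \<le> d / 2"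
        "rho \<le> eps * eps' / 40" "16 * rho \<le> d"
    and fin: "finite A'" "finite B'"
    and sub: "A0 \<subseteq> A" "A0 \<subseteq> A'" "B0 \<subseteq> B" "B0 \<subseteq> B'"
    and cA: "real (card A) \<le> real (card A0) + N" "real (card A') \<le> real (card A0) + N"
    and cB: "real (card B) \<le> real (card B0) + N" "real (card B') \<le> real (card B0) + N"
    and NA: "N \<le> rho * real (card A)" and NB: "N \<le> rho * real (card B)"
  shows "regular_pair eps' d' E A' B'"
proof -
  have pos: "card A > 0" "card B > 0" using regular_pos[OF reg par(4)] by auto
  hence finAB: "finite A" "finite B" using card_gt_0_iff by blast+
  define a where "a = real (card A)"
  define b where "b = real (card B)"
  define a0 where "a0 = real (card A0)"
  define b0 where "b0 = real (card B0)"
  have ap: "a > 0" "b > 0" using pos unfolding a_def b_def by auto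
  have a0le: "a0 \<le> a" "b0 \<le> b" unfolding a_def a0_def b_def b0_def
    using card_mono[OF finAB(1) sub(1)] card_mono[OF finAB(2) sub(3)] by auto
  have N0: "N \<ge> 0" using cA(1) a0le unfolding a_def a0_def by linarith
  have rho0: "rho \<ge> 0"
  proof (rule ccontr)
    assume "\<not> rho \<ge> 0"
    hence "rho * a < 0" using ap by (simp add: mult_neg_pos)
    thus False using N0 NA unfolding a_def by linarith
  qed
  have rho1: "rho \<le> eps' / 80"
  proof -
    have "eps * eps' \<le> (1/2) * eps'" using par by (intro mult_right_mono) auto
    thus ?thesis using par by linarith
  qed
  have a0big: "a0 \<ge> a / 2" "b0 \<ge> b / 2"
  proof -
    have "rho * a \<le> (1/80) * a" using rho1 par ap by (intro mult_right_mono) auto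
    moreover have "rho * b \<le> (1/80) * b" using rho1 par ap by (intro mult_right_mono) auto
    ultimately show "a0 \<ge> a / 2" "b0 \<ge> b / 2" using cA(1) cB(1) NA NB unfolding a_def a0_def b_def b0_def
      by linarith+
  qed
  have a0p: "a0 > 0" "b0 > 0" using a0big ap by linarith+
  have NA0: "N / a0 \<le> 2 * rho"
  proof -
    have "N \<le> rho * a" using NA unfolding a_def .
    also have "\<dots> \<le> rho * (2 * a0)" using a0big rho0 by (intro mult_left_mono) auto
    finally show ?thesis using a0p by (simp add: divide_le_eq mult_ac)
  qed
  have NB0: "N / b0 \<le> 2 * rho"
  proof -
    have "N \<le> rho * b" using NB unfolding b_def .
    also have "\<dots> \<le> rho * (2 * b0)" using a0big rho0 by (intro mult_left_mono) auto
    finally show ?thesis using a0p by (simp add: divide_le_eq mult_ac)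
  qed
  have cpos: "card A0 > 0" "card B0 > 0" using a0p unfolding a0_def b0_def by auto
  have d1: "\<bar>density E A B - density E A0 B0\<bar> \<le> 4 * rho"
    using dens_diff[OF finAB sub(1) sub(3) cpos cA(1) cB(1), of E] NA0 NB0
    unfolding a0_def b0_def by linarith
  have d2: "\<bar>density E A' B' - density E A0 B0\<bar> \<le> 4 * rho"
    using dens_diff[OF fin sub(2) sub(4) cpos cA(2) cB(2), of E] NA0 NB0
    unfolding a0_def b0_def by linarith
  have dAB: "density E A B \<ge> d" using reg unfolding regular_pair_def by simp
  have rd: "8 * rho \<le> eps' / 10" using rho1 by linarith
  have dens': "density E A' B' \<ge> d'" using d1 d2 dAB par by linarith
  show ?thesis unfolding regular_pair_def
  proof (intro conjI dens' allI impI)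
    fix X Y assume H: "X \<subseteq> A' \<and> Y \<subseteq> B' \<and> real (card X) \<ge> eps' * real (card A')
       \<and> real (card Y) \<ge> eps' * real (card B')"
    define X0 where "X0 = X \<inter> A0"
    define Y0 where "Y0 = Y \<inter> B0"
    have finXY: "finite X" "finite Y" using H fin finite_subset by blast+
    have X0s: "X0 \<subseteq> X" "X0 \<subseteq> A" "Y0 \<subseteq> Y" "Y0 \<subseteq> B" using sub unfolding X0_def Y0_def by auto
    have cX: "real (card X) \<le> real (card X0) + N"
    proof -
      have "X \<subseteq> X0 \<union> (A' - A0)" using H unfolding X0_def by auto
      hence "card X \<le> card (X0 \<union> (A' - A0))" using fin finXY unfolding X0_def by (intro card_mono) auto
      also have "\<dots> \<le> card X0 + card (A' - A0)" by (rule card_Un_le)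
      also have "card (A' - A0) = card A' - card A0"
        using sub fin by (intro card_Diff_subset) (auto intro: finite_subset)
      finally have "card X \<le> card X0 + (card A' - card A0)" .
      moreover have "card A0 \<le> card A'" using sub fin by (intro card_mono) auto
      ultimately have "card X + card A0 \<le> card X0 + card A'" by linarith
      hence "real (card X + card A0) \<le> real (card X0 + card A')" by (simp only: of_nat_le_iff)
      thus ?thesis using cA(2) by simp
    qed
    have cY: "real (card Y) \<le> real (card Y0) + N"
    proof -
      have "Y \<subseteq> Y0 \<union> (B' - B0)" using H unfolding Y0_def by auto
      hence "card Y \<le> card (Y0 \<union> (B' - B0))" using fin finXY unfolding Y0_def by (intro card_mono) auto
      also have "\<dots> \<le> card Y0 + card (B' - B0)" by (rule card_Un_le)
      also have "card (B' - B0) = card B' - card B0"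
        using sub fin by (intro card_Diff_subset) (auto intro: finite_subset)
      finally have "card Y \<le> card Y0 + (card B' - card B0)" .
      moreover have "card B0 \<le> card B'" using sub fin by (intro card_mono) auto
      ultimately have "card Y + card B0 \<le> card Y0 + card B'" by linarith
      hence "real (card Y + card B0) \<le> real (card Y0 + card B')" by (simp only: of_nat_le_iff)
      thus ?thesis using cB(2) by simp
    qed
    have a0a': "a0 \<le> real (card A')" "b0 \<le> real (card B')"
      unfolding a0_def b0_def using sub fin by (auto intro: card_mono)
    have X0big: "real (card X0) \<ge> eps * a"
    proof -
      have h1: "eps' * a0 \<le> eps' * real (card A')" using a0a' par by (intro mult_left_mono) auto
      have h2: "eps' * (a - N) \<le> eps' * a0"
        using cA(1) par unfolding a_def a0_def by (intro mult_left_mono) auto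
      have h3: "eps' * N \<le> N" using par N0 by (intro mult_left_le_one_le) auto
      have h4: "(2 * rho) * a \<le> (eps' / 2) * a" using rho1 rho0 ap by (intro mult_right_mono) auto
      have h5: "eps * a \<le> (eps' / 2) * a" using par ap by (intro mult_right_mono) auto
      have h6: "N \<le> rho * a" using NA unfolding a_def .
      have h2': "eps' * a - eps' * N \<le> eps' * a0" using h2 by (simp add: right_diff_distrib)
      have h4': "2 * (rho * a) \<le> (eps' / 2) * a" using h4 by (simp add: mult.assoc)
      have h7: "eps' * real (card A') \<le> real (card X)" using H by blast
      from h1 h2' h3 h4' h5 h6 h7 cX show ?thesis by linarith
    qed
    have Y0big: "real (card Y0) \<ge> eps * b"
    proof -
      have h1: "eps' * b0 \<le> eps' * real (card B')" using a0a' par by (intro mult_left_mono) auto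
      have h2: "eps' * (b - N) \<le> eps' * b0"
        using cB(1) par unfolding b_def b0_def by (intro mult_left_mono) auto
      have h3: "eps' * N \<le> N" using par N0 by (intro mult_left_le_one_le) auto
      have h4: "(2 * rho) * b \<le> (eps' / 2) * b" using rho1 rho0 ap by (intro mult_right_mono) auto
      have h5: "eps * b \<le> (eps' / 2) * b" using par ap by (intro mult_right_mono) auto
      have h6: "N \<le> rho * b" using NB unfolding b_def .
      have h2': "eps' * b - eps' * N \<le> eps' * b0" using h2 by (simp add: right_diff_distrib)
      have h4': "2 * (rho * b) \<le> (eps' / 2) * b" using h4 by (simp add: mult.assoc)
      have h7: "eps' * real (card B') \<le> real (card Y)" using H by blast
      from h1 h2' h3 h4' h5 h6 h7 cY show ?thesis by linarith
    qed
    have X0p: "card X0 > 0" "card Y0 > 0"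
      proof -
      have "eps * a > 0" "eps * b > 0" using ap par by auto
      hence "real (card X0) > 0" "real (card Y0) > 0" using X0big Y0big by linarith+
      thus "card X0 > 0" "card Y0 > 0" by simp_all
    qed
    have close: "\<bar>density E A B - density E X0 Y0\<bar> < eps"
      using reg X0s X0big Y0big unfolding regular_pair_def a_def b_def by blast
    have q1: "N / real (card X0) \<le> rho / eps"
    proof -
      have "N \<le> rho * a" using NA unfolding a_def .
      also have "\<dots> = (rho / eps) * (eps * a)" using par by simp
      also have "\<dots> \<le> (rho / eps) * real (card X0)"
        using X0big rho0 par by (intro mult_left_mono) auto
      finally show ?thesis using X0p by (simp add: divide_le_eq mult_ac)
    qed
    have q2: "N / real (card Y0) \<le> rho / eps"
    proof -
      have "N \<le> rho * b" using NB unfolding b_def .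
      also have "\<dots> = (rho / eps) * (eps * b)" using par by simp
      also have "\<dots> \<le> (rho / eps) * real (card Y0)"
        using Y0big rho0 par by (intro mult_left_mono) auto
      finally show ?thesis using X0p by (simp add: divide_le_eq mult_ac)
    qed
    have re: "rho / eps \<le> eps' / 40" using par by (simp add: divide_le_eq mult_ac)
    have dd: "\<bar>density E X Y - density E X0 Y0\<bar> \<le> N / real (card X0) + N / real (card Y0)"
      by (rule dens_diff[OF finXY X0s(1) X0s(3) X0p cX cY])
    show "\<bar>density E A' B' - density E X Y\<bar> < eps'"
      using d1 d2 close dd q1 q2 re rd par by linarith
  qed
qed

fun eff :: "(cls \<times> cls) list \<Rightarrow> cls \<Rightarrow> int" where
  "eff [] z = 0"
| "eff ((s, t) # L) z = (if z = t then 1 else 0) - (if z = s then 1 else 0) + eff L z"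

lemma eff_append: "eff (L1 @ L2) z = eff L1 z + eff L2 z"
proof (induction L1)
  case Nil then show ?case by simp
next
  case (Cons p L) then show ?case by (cases p) simp
qed

fun partner :: "cls \<Rightarrow> cls" where
  "partner (ACl i) = BCl i"
| "partner (BCl i) = ACl i"

lemma partition_sub: "is_cls_partition k V Q \<Longrightarrow> valid_cls k c \<Longrightarrow> Q c \<subseteq> V"
  unfolding is_cls_partition_def by blast

lemma partition_disj: "is_cls_partition k V Q \<Longrightarrow> valid_cls k c \<Longrightarrow> valid_cls k c' \<Longrightarrow> c \<noteq> c'
   \<Longrightarrow> x \<in> Q c \<Longrightarrow> x \<notin> Q c'"
  unfolding is_cls_partition_def by blast

lemma move_one:
  assumes part: "is_cls_partition k V Q" and fin: "finite V"
    and vs: "valid_cls k s" and vt: "valid_cls k t" and xs: "x \<in> Q s"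
  defines "Q' \<equiv> (\<lambda>c. if c = t then insert x (Q c) else Q c - {x})"
  shows "is_cls_partition k V Q'"
    and "\<And>c. valid_cls k c \<Longrightarrow> int (card (Q' c)) = int (card (Q c)) + ((if c = t then 1 else 0) - (if c = s then 1 else 0))"
    and "\<And>c. Q' c \<subseteq> insert x (Q c)"
    and "\<And>c. Q c \<subseteq> insert x (Q' c)"
proof -
  have xV: "x \<in> V" using partition_sub[OF part vs] xs by blast
  show "is_cls_partition k V Q'"
    unfolding is_cls_partition_def
  proof (intro conjI allI impI)
    fix c c' assume H: "valid_cls k c \<and> valid_cls k c' \<and> c \<noteq> c'"
    have "Q c \<inter> Q c' = {}" using part H unfolding is_cls_partition_def by blast
    thus "Q' c \<inter> Q' c' = {}" using H unfolding Q'_def by auto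
  next
    show "(\<Union>c\<in>{c. valid_cls k c}. Q' c) = V"
    proof
      show "(\<Union>c\<in>{c. valid_cls k c}. Q' c) \<subseteq> V"
        using partition_sub[OF part] xV unfolding Q'_def by auto
    next
      show "V \<subseteq> (\<Union>c\<in>{c. valid_cls k c}. Q' c)"
      proof
        fix v assume v: "v \<in> V"
        show "v \<in> (\<Union>c\<in>{c. valid_cls k c}. Q' c)"
        proof (cases "v = x")
          case True thus ?thesis using vt unfolding Q'_def by auto
        next
          case False
          from v part obtain c where "valid_cls k c" "v \<in> Q c" unfolding is_cls_partition_def by blast
          thus ?thesis using False unfolding Q'_def by auto
        qed
      qed
    qed
  qed
  show "\<And>c. Q' c \<subseteq> insert x (Q c)" "\<And>c. Q c \<subseteq> insert x (Q' c)" unfolding Q'_def by auto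
  fix c assume vc: "valid_cls k c"
  have finQ: "finite (Q c)" using partition_sub[OF part vc] fin finite_subset by blast
  show "int (card (Q' c)) = int (card (Q c)) + ((if c = t then 1 else 0) - (if c = s then 1 else 0))"
  proof (cases "c = t")
    case True
    show ?thesis
    proof (cases "t = s")
      case True
      with \<open>c = t\<close> xs show ?thesis unfolding Q'_def by (simp add: insert_absorb)
    next
      case False
      have "x \<notin> Q t" using partition_disj[OF part vs vt] False xs by metis
      with \<open>c = t\<close> False finQ show ?thesis unfolding Q'_def by simp
    qed
  next
    case False
    show ?thesis
    proof (cases "c = s")
      case True
      have "card (Q s) \<ge> 1" using xs finQ True card_0_eq by fastforce
      with True False xs finQ show ?thesis unfolding Q'_def by (simp add: of_nat_diff)
    next
      case F2: False
      have "x \<notin> Q c" using partition_disj[OF part vs vc] F2 xs by metis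
      with False F2 show ?thesis unfolding Q'_def by simp
    qed
  qed
qed

lemma moves:
  assumes part: "is_cls_partition k V P" and fin: "finite V"
    and typs: "\<And>s t. (s, t) \<in> set L \<Longrightarrow> valid_cls k s \<and> valid_cls k t
              \<and> 2 * card {x\<in>P s. Good t x} > card (P s)"
    and small: "\<And>c. valid_cls k c \<Longrightarrow> 2 * length L \<le> card (P c)"
    and base: "\<And>c x. valid_cls k c \<Longrightarrow> x \<in> P c \<Longrightarrow> Good c x"
  shows "\<exists>Q. is_cls_partition k V Q \<and> (\<forall>c. valid_cls k c \<longrightarrow>
      int (card (Q c)) = int (card (P c)) + eff L c \<and> card (P c - Q c) \<le> length L
      \<and> card (Q c - P c) \<le> length L \<and> (\<forall>x\<in>Q c. Good c x))"
  using typs small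
proof (induction L)
  case Nil
  show ?case
    by (rule exI[of _ P]) (use part base in auto)
next
  case (Cons p L)
  obtain s t where p: "p = (s, t)" by (cases p)
  have "\<exists>Q. is_cls_partition k V Q \<and> (\<forall>c. valid_cls k c \<longrightarrow>
      int (card (Q c)) = int (card (P c)) + eff L c \<and> card (P c - Q c) \<le> length L
      \<and> card (Q c - P c) \<le> length L \<and> (\<forall>x\<in>Q c. Good c x))"
    using Cons.IH Cons.prems by fastforce
  then obtain Q where Q: "is_cls_partition k V Q"
    and QQ: "\<And>c. valid_cls k c \<Longrightarrow> int (card (Q c)) = int (card (P c)) + eff L c \<and> card (P c - Q c) \<le> length L
      \<and> card (Q c - P c) \<le> length L \<and> (\<forall>x\<in>Q c. Good c x)" by blast
  have st: "valid_cls k s" "valid_cls k t" "2 * card {x\<in>P s. Good t x} > card (P s)"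
    using Cons.prems(1)[of s t] p by auto
  have sm: "2 * length L + 2 \<le> card (P s)" using Cons.prems(2)[OF st(1)] by simp
  have finPs: "finite (P s)" using partition_sub[OF part st(1)] fin finite_subset by blast
  have "\<exists>x. x \<in> P s \<and> x \<in> Q s \<and> Good t x"
  proof (rule ccontr)
    assume "\<not> ?thesis"
    hence "{x\<in>P s. Good t x} \<subseteq> P s - Q s" by auto
    hence "card {x\<in>P s. Good t x} \<le> card (P s - Q s)" using finPs by (intro card_mono) auto
    also have "\<dots> \<le> length L" using QQ[OF st(1)] by simp
    finally show False using st(3) sm by linarith
  qed
  then obtain x where x: "x \<in> P s" "x \<in> Q s" "Good t x" by blast
  define Q' where "Q' = (\<lambda>c. if c = t then insert x (Q c) else Q c - {x})"
  note mo = move_one[OF Q fin st(1) st(2) x(2)]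
  show ?case
  proof (intro exI[of _ Q'] conjI allI impI)
    show "is_cls_partition k V Q'" unfolding Q'_def by (rule mo(1))
    fix c assume vc: "valid_cls k c"
    have e: "eff (p # L) c = eff L c + ((if c = t then 1 else 0) - (if c = s then 1 else 0))"
      using p by simp
    have m2: "int (card (Q' c)) = int (card (Q c)) + ((if c = t then 1 else 0) - (if c = s then 1 else 0))"
      unfolding Q'_def by (rule mo(2)[OF vc])
    have "int (card (Q c)) = int (card (P c)) + eff L c" using QQ[OF vc] by blast
    then show "int (card (Q' c)) = int (card (P c)) + eff (p # L) c"
      using m2 e by linarith
    have "P c - Q' c \<subseteq> insert x (P c - Q c)" using mo(4)[of c] unfolding Q'_def by auto
    hence "card (P c - Q' c) \<le> card (insert x (P c - Q c))"
      using partition_sub[OF part vc] fin by (intro card_mono) (auto intro: finite_subset)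
    also have "\<dots> \<le> Suc (card (P c - Q c))" by (cases "finite (P c - Q c)") (auto simp: card_insert_if)
    finally show "card (P c - Q' c) \<le> length (p # L)" using QQ[OF vc] by simp
    have "Q' c - P c \<subseteq> insert x (Q c - P c)" using mo(3)[of c] unfolding Q'_def by auto
    hence "card (Q' c - P c) \<le> card (insert x (Q c - P c))"
      using partition_sub[OF Q vc] fin unfolding Q'_def by (intro card_mono) (auto intro: finite_subset)
    also have "\<dots> \<le> Suc (card (Q c - P c))" by (cases "finite (Q c - P c)") (auto simp: card_insert_if)
    finally show "card (Q' c - P c) \<le> length (p # L)" using QQ[OF vc] by simp
    show "\<forall>y\<in>Q' c. Good c y"
    proof
      fix y assume "y \<in> Q' c"
      thus "Good c y" using QQ[OF vc] x(3) unfolding Q'_def by (auto split: if_splits)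
    qed
  qed
qed

definition ind :: "cls \<Rightarrow> cls \<Rightarrow> int" where "ind c z = (if z = c then 1 else 0)"

lemma eff_single: "eff [(s, t)] z = ind t z - ind s z"
  by (simp add: ind_def)

lemma realize:
  assumes finC: "finite C"
    and path: "\<And>c c'. c \<in> C \<Longrightarrow> c' \<in> C \<Longrightarrow> \<exists>L. (\<forall>p\<in>set L. leg p)
        \<and> (\<forall>z. eff L z = ind c' z - ind c z) \<and> length L \<le> K"
  shows "sum \<delta> C = 0 \<Longrightarrow> \<exists>L. (\<forall>p\<in>set L. leg p) \<and> (\<forall>z\<in>C. eff L z = \<delta> z)
      \<and> 2 * length L \<le> K * nat (\<Sum>z\<in>C. \<bar>\<delta> z\<bar>)"
proof (induction "nat (\<Sum>z\<in>C. \<bar>\<delta> z\<bar>)" arbitrary: \<delta> rule: less_induct)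
  case less
  show ?case
  proof (cases "\<forall>z\<in>C. \<delta> z = 0")
    case True
    thus ?thesis by (intro exI[of _ "[]"]) auto
  next
    case False
    then obtain z0 where z0: "z0 \<in> C" "\<delta> z0 \<noteq> 0" by blast
    have "\<exists>c'\<in>C. \<delta> c' > 0"
    proof (rule ccontr)
      assume "\<not> ?thesis"
      hence "\<forall>z\<in>C. 0 \<le> - \<delta> z" by (auto simp: not_less)
      moreover have "sum (\<lambda>z. - \<delta> z) C = 0" using less.prems by (simp add: sum_negf)
      ultimately have "\<forall>z\<in>C. - \<delta> z = 0" using sum_nonneg_eq_0_iff[OF finC, of "\<lambda>z. - \<delta> z"] by simp
      thus False using z0 by auto
    qed
    then obtain c' where c': "c' \<in> C" "\<delta> c' > 0" by blast
    have "\<exists>c\<in>C. \<delta> c < 0"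
    proof (rule ccontr)
      assume "\<not> ?thesis"
      hence "\<forall>z\<in>C. 0 \<le> \<delta> z" by (auto simp: not_less)
      hence "\<forall>z\<in>C. \<delta> z = 0" using sum_nonneg_eq_0_iff[OF finC, of \<delta>] less.prems by simp
      thus False using z0 by auto
    qed
    then obtain c where c: "c \<in> C" "\<delta> c < 0" by blast
    have cc: "c \<noteq> c'" using c c' by auto
    obtain L1 where L1: "\<forall>p\<in>set L1. leg p" "\<forall>z. eff L1 z = ind c' z - ind c z" "length L1 \<le> K"
      using path[OF c(1) c'(1)] by blast
    define \<delta>' where "\<delta>' = (\<lambda>z. \<delta> z - (ind c' z - ind c z))"
    have s1: "sum (ind c') C = 1" "sum (ind c) C = 1"
      using c c' finC unfolding ind_def by (simp_all add: sum.delta')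
    have sd: "sum \<delta>' C = 0"
      unfolding \<delta>'_def using less.prems s1 by (simp add: sum_subtractf)
    have pw: "\<bar>\<delta>' z\<bar> = \<bar>\<delta> z\<bar> - ind c' z - ind c z" for z
    proof (cases "z = c'")
      case True
      hence "\<delta>' z = \<delta> c' - 1" "ind c' z = 1" "ind c z = 0" using cc unfolding \<delta>'_def ind_def by auto
      thus ?thesis using c' True by simp
    next
      case False
      show ?thesis
      proof (cases "z = c")
        case True
        hence "\<delta>' z = \<delta> c + 1" "ind c' z = 0" "ind c z = 1" using cc unfolding \<delta>'_def ind_def by auto
        thus ?thesis using c True by simp
      next
        case F2: False
        hence "\<delta>' z = \<delta> z" "ind c' z = 0" "ind c z = 0" using False unfolding \<delta>'_def ind_def by auto
        thus ?thesis by simp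
      qed
    qed
    have sabs: "(\<Sum>z\<in>C. \<bar>\<delta>' z\<bar>) = (\<Sum>z\<in>C. \<bar>\<delta> z\<bar>) - 2"
      unfolding pw using s1 by (simp add: sum_subtractf)
    have ge: "(\<Sum>z\<in>C. \<bar>\<delta> z\<bar>) \<ge> 2"
      using sabs sum_nonneg[of C "\<lambda>z. \<bar>\<delta>' z\<bar>"] by auto
    have lt: "nat (\<Sum>z\<in>C. \<bar>\<delta>' z\<bar>) < nat (\<Sum>z\<in>C. \<bar>\<delta> z\<bar>)" using sabs ge by linarith
    obtain L2 where L2: "\<forall>p\<in>set L2. leg p" "\<forall>z\<in>C. eff L2 z = \<delta>' z"
        "2 * length L2 \<le> K * nat (\<Sum>z\<in>C. \<bar>\<delta>' z\<bar>)"
      using less.hyps[OF lt sd] by blast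
    show ?thesis
    proof (intro exI[of _ "L1 @ L2"] conjI ballI)
      show "\<And>p. p \<in> set (L1 @ L2) \<Longrightarrow> leg p" using L1 L2 by auto
      show "\<And>z. z \<in> C \<Longrightarrow> eff (L1 @ L2) z = \<delta> z"
        using L1 L2 unfolding eff_append \<delta>'_def by auto
      have "nat (\<Sum>z\<in>C. \<bar>\<delta>' z\<bar>) + 2 = nat (\<Sum>z\<in>C. \<bar>\<delta> z\<bar>)" using sabs ge by linarith
      hence "K * nat (\<Sum>z\<in>C. \<bar>\<delta> z\<bar>) = K * (nat (\<Sum>z\<in>C. \<bar>\<delta>' z\<bar>) + 2)"
        by simp
      hence "K * nat (\<Sum>z\<in>C. \<bar>\<delta> z\<bar>) = K * nat (\<Sum>z\<in>C. \<bar>\<delta>' z\<bar>) + 2 * K"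
        by (simp add: algebra_simps)
      thus "2 * length (L1 @ L2) \<le> K * nat (\<Sum>z\<in>C. \<bar>\<delta> z\<bar>)" using L1(3) L2(3) by simp
    qed
  qed
qed

lemma achain_eff: "y \<le> x \<Longrightarrow> eff (map (\<lambda>m. (ACl (Suc m), ACl m)) [y..<x]) z = ind (ACl y) z - ind (ACl x) z"
proof (induction x)
  case 0 thus ?case by simp
next
  case (Suc x)
  show ?case
  proof (cases "y = Suc x")
    case True thus ?thesis by simp
  next
    case False
    hence "y \<le> x" using Suc.prems by simp
    thus ?thesis using Suc.IH by (simp add: eff_append ind_def)
  qed
qed

lemma bchain_eff: "x \<le> y \<Longrightarrow> eff (map (\<lambda>m. (BCl m, BCl (Suc m))) [x..<y]) z = ind (BCl y) z - ind (BCl x) z"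
proof (induction y)
  case 0 thus ?case by simp
next
  case (Suc y)
  show ?case
  proof (cases "x = Suc y")
    case True thus ?thesis by simp
  next
    case False
    hence "x \<le> y" using Suc.prems by simp
    thus ?thesis using Suc.IH by (simp add: eff_append ind_def)
  qed
qed

locale movegraph =
  fixes k :: nat and leg :: "cls \<times> cls \<Rightarrow> bool" and i1 j1 i2 j2 :: nat
  assumes k1: "1 \<le> k"
    and ij: "i1 \<in> {1..k}" "j1 \<in> {1..k}" "i2 \<in> {1..k}" "j2 \<in> {1..k}"
    and la: "\<And>m. 1 \<le> m \<Longrightarrow> m < k \<Longrightarrow> leg (ACl (Suc m), ACl m)"
    and lb: "\<And>m. 1 \<le> m \<Longrightarrow> m < k \<Longrightarrow> leg (BCl m, BCl (Suc m))"
    and la1: "leg (ACl 1, ACl k)" and lb1: "leg (BCl k, BCl 1)"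
    and lab: "leg (ACl i1, BCl j1)" and lba: "leg (BCl i2, ACl j2)"
begin

lemma apath: "x \<in> {1..k} \<Longrightarrow> y \<in> {1..k} \<Longrightarrow> \<exists>L. (\<forall>p\<in>set L. leg p)
        \<and> (\<forall>z. eff L z = ind (ACl y) z - ind (ACl x) z) \<and> length L \<le> k"
proof -
  assume x: "x \<in> {1..k}" and y: "y \<in> {1..k}"
  show ?thesis
  proof (cases "y \<le> x")
    case True
    show ?thesis
      by (intro exI[of _ "map (\<lambda>m. (ACl (Suc m), ACl m)) [y..<x]"])
        (use True x y la achain_eff in auto)
  next
    case False
    let ?L = "map (\<lambda>m. (ACl (Suc m), ACl m)) [1..<x] @ [(ACl 1, ACl k)] @ map (\<lambda>m. (ACl (Suc m), ACl m)) [y..<k]"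
    have "\<forall>p\<in>set ?L. leg p" using x y la la1 by auto
    moreover have "\<forall>z. eff ?L z = ind (ACl y) z - ind (ACl x) z"
      using x y by (simp add: eff_append eff_single achain_eff ind_def)
    moreover have "length ?L \<le> k" using x y False by auto
    ultimately show ?thesis by blast
  qed
qed

lemma bpath: "x \<in> {1..k} \<Longrightarrow> y \<in> {1..k} \<Longrightarrow> \<exists>L. (\<forall>p\<in>set L. leg p)
        \<and> (\<forall>z. eff L z = ind (BCl y) z - ind (BCl x) z) \<and> length L \<le> k"
proof -
  assume x: "x \<in> {1..k}" and y: "y \<in> {1..k}"
  show ?thesis
  proof (cases "x \<le> y")
    case True
    show ?thesis
      by (intro exI[of _ "map (\<lambda>m. (BCl m, BCl (Suc m))) [x..<y]"])
        (use True x y lb bchain_eff in auto)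
  next
    case False
    let ?L = "map (\<lambda>m. (BCl m, BCl (Suc m))) [x..<k] @ [(BCl k, BCl 1)] @ map (\<lambda>m. (BCl m, BCl (Suc m))) [1..<y]"
    have "\<forall>p\<in>set ?L. leg p" using x y lb lb1 by auto
    moreover have "\<forall>z. eff ?L z = ind (BCl y) z - ind (BCl x) z"
      using x y by (simp add: eff_append eff_single bchain_eff ind_def)
    moreover have "length ?L \<le> k" using x y False by auto
    ultimately show ?thesis by blast
  qed
qed

lemma path: "valid_cls k c \<Longrightarrow> valid_cls k c' \<Longrightarrow> \<exists>L. (\<forall>p\<in>set L. leg p)
        \<and> (\<forall>z. eff L z = ind c' z - ind c z) \<and> length L \<le> 2 * k + 1"
proof -
  assume vc: "valid_cls k c" and vc': "valid_cls k c'"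
  show ?thesis
  proof (cases c)
    case (ACl x)
    hence x: "x \<in> {1..k}" using vc by (simp add: valid_cls_def)
    show ?thesis
    proof (cases c')
      case (ACl y)
      hence y: "y \<in> {1..k}" using vc' by (simp add: valid_cls_def)
      obtain L where "\<forall>p\<in>set L. leg p" "\<forall>z. eff L z = ind (ACl y) z - ind (ACl x) z" "length L \<le> k"
        using apath[OF x y] by blast
      thus ?thesis using \<open>c = ACl x\<close> ACl by (intro exI[of _ L]) auto
    next
      case (BCl y)
      hence y: "y \<in> {1..k}" using vc' by (simp add: valid_cls_def)
      obtain L1 where L1: "\<forall>p\<in>set L1. leg p" "\<forall>z. eff L1 z = ind (ACl i1) z - ind (ACl x) z" "length L1 \<le> k"
        using apath[OF x ij(1)] by blast
      obtain L2 where L2: "\<forall>p\<in>set L2. leg p" "\<forall>z. eff L2 z = ind (BCl y) z - ind (BCl j1) z" "length L2 \<le> k"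
        using bpath[OF ij(2) y] by blast
      show ?thesis
        by (intro exI[of _ "L1 @ [(ACl i1, BCl j1)] @ L2"])
          (use L1 L2 lab \<open>c = ACl x\<close> BCl in \<open>auto simp: eff_append eff_single ind_def\<close>)
    qed
  next
    case (BCl x)
    hence x: "x \<in> {1..k}" using vc by (simp add: valid_cls_def)
    show ?thesis
    proof (cases c')
      case (ACl y)
      hence y: "y \<in> {1..k}" using vc' by (simp add: valid_cls_def)
      obtain L1 where L1: "\<forall>p\<in>set L1. leg p" "\<forall>z. eff L1 z = ind (BCl i2) z - ind (BCl x) z" "length L1 \<le> k"
        using bpath[OF x ij(3)] by blast
      obtain L2 where L2: "\<forall>p\<in>set L2. leg p" "\<forall>z. eff L2 z = ind (ACl y) z - ind (ACl j2) z" "length L2 \<le> k"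
        using apath[OF ij(4) y] by blast
      show ?thesis
        by (intro exI[of _ "L1 @ [(BCl i2, ACl j2)] @ L2"])
          (use L1 L2 lba \<open>c = BCl x\<close> ACl in \<open>auto simp: eff_append eff_single ind_def\<close>)
    next
      case (BCl y)
      hence y: "y \<in> {1..k}" using vc' by (simp add: valid_cls_def)
      obtain L where "\<forall>p\<in>set L. leg p" "\<forall>z. eff L z = ind (BCl y) z - ind (BCl x) z" "length L \<le> k"
        using bpath[OF x y] by blast
      thus ?thesis using \<open>c = BCl x\<close> BCl by (intro exI[of _ L]) auto
    qed
  qed
qed

end

lemma deg_keep:
  assumes fin: "finite PB" "finite QB" and g: "real (card {y\<in>PB. E x y}) \<ge> (d - eps) * real (card PB)"
    and n1: "real (card (PB - QB)) \<le> N" and n2: "real (card QB) \<le> real (card PB) + N"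
    and nr: "N \<le> rho * real (card PB)"
    and par: "0 < d" "d \<le> 1" "eps \<le> d / 4" "d' \<le> d / 2" "0 < d'" "rho \<le> d / 160"
  shows "real (card {y\<in>QB. E x y}) \<ge> d' * real (card QB)"
proof -
  define b where "b = real (card PB)"
  have b0: "b \<ge> 0" unfolding b_def by simp
  have "{y\<in>PB. E x y} \<subseteq> {y\<in>QB. E x y} \<union> (PB - QB)" by auto
  hence "card {y\<in>PB. E x y} \<le> card ({y\<in>QB. E x y} \<union> (PB - QB))"
    using fin by (intro card_mono) (auto simp: finite_Un intro: finite_subset)
  hence "card {y\<in>PB. E x y} \<le> card {y\<in>QB. E x y} + card (PB - QB)"
    using card_Un_le[of "{y\<in>QB. E x y}" "PB - QB"] by linarith
  hence k1: "real (card {y\<in>PB. E x y}) \<le> real (card {y\<in>QB. E x y}) + N"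
    using n1 by (smt (verit) of_nat_add of_nat_le_iff)
  have N0: "N \<ge> 0" using n1 by (smt (verit) of_nat_0_le_iff)
  have h1: "eps * b \<le> (d / 4) * b" using par b0 by (intro mult_right_mono) auto
  have h2: "d' * b \<le> (d / 2) * b" using par b0 by (intro mult_right_mono) auto
  have h3: "d' * N \<le> N" using par N0 by (intro mult_left_le_one_le) auto
  have h4: "rho * b \<le> (d / 160) * b" using par b0 by (intro mult_right_mono) auto
  have h5: "d' * real (card QB) \<le> d' * (b + N)" using n2 par unfolding b_def by (intro mult_left_mono) auto
  have "(d - eps) * b = d * b - eps * b" by (simp add: algebra_simps)
  moreover have "d' * (b + N) = d' * b + d' * N" by (simp add: algebra_simps)
  ultimately show ?thesis using g k1 nr h1 h2 h3 h4 h5 unfolding b_def[symmetric] by linarith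
qed

lemma sumC:
  "(\<Sum>z\<in>{z. valid_cls k z}. f z) = (\<Sum>i=1..k. f (ACl i)) + (\<Sum>i=1..k. f (BCl i))"
proof -
  have C: "{z. valid_cls k z} = ACl ` {1..k} \<union> BCl ` {1..k}"
  proof (rule set_eqI)
    fix z show "z \<in> {z. valid_cls k z} \<longleftrightarrow> z \<in> ACl ` {1..k} \<union> BCl ` {1..k}"
      by (cases z) (auto simp: valid_cls_def)
  qed
  have "(\<Sum>z\<in>ACl ` {1..k} \<union> BCl ` {1..k}. f z) = (\<Sum>z\<in>ACl ` {1..k}. f z) + (\<Sum>z\<in>BCl ` {1..k}. f z)"
    by (rule sum.union_disjoint) auto
  also have "(\<Sum>z\<in>ACl ` {1..k}. f z) = (\<Sum>i=1..k. f (ACl i))" by (rule sum.reindex_cong[of ACl]) (auto simp: inj_on_def)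
  also have "(\<Sum>z\<in>BCl ` {1..k}. f z) = (\<Sum>i=1..k. f (BCl i))" by (rule sum.reindex_cong[of BCl]) (auto simp: inj_on_def)
  finally show ?thesis unfolding C .
qed

lemma finite_C: "finite {z. valid_cls k z}"
proof -
  have "{z. valid_cls k z} \<subseteq> ACl ` {1..k} \<union> BCl ` {1..k}"
  proof
    fix z assume "z \<in> {z. valid_cls k z}" thus "z \<in> ACl ` {1..k} \<union> BCl ` {1..k}"
      by (cases z) (auto simp: valid_cls_def)
  qed
  thus ?thesis by (rule finite_subset) auto
qed

lemma closeness:
  assumes "finite A" "finite B" "card (A - B) \<le> n" "card (B - A) \<le> n"
  shows "real (card A) \<le> real (card (A \<inter> B)) + real n"
    and "real (card B) \<le> real (card (A \<inter> B)) + real n"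
    and "real (card B) \<le> real (card A) + real n"
proof -
  have c1: "card A = card (A \<inter> B) + card (A - B)" using card_Int_Diff[OF assms(1)] .
  have c2: "card B = card (B \<inter> A) + card (B - A)" using card_Int_Diff[OF assms(2)] .
  have c3: "card (A \<inter> B) \<le> card A" using assms(1) by (intro card_mono) auto
  have "B \<inter> A = A \<inter> B" by blast
  with c1 c2 c3 assms(3,4) show "real (card A) \<le> real (card (A \<inter> B)) + real n"
    and "real (card B) \<le> real (card (A \<inter> B)) + real n"
    and "real (card B) \<le> real (card A) + real n" by simp_all
qed

lemma core:
  fixes V :: "nat set" and E :: "nat \<Rightarrow> nat \<Rightarrow> bool" and R :: "cls \<Rightarrow> cls \<Rightarrow> bool"
    and P :: "cls \<Rightarrow> nat set" and a b :: "nat \<Rightarrow> int"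
  assumes par: "0 < d" "d \<le> 1" "0 < d'" "d' \<le> d / 2" "0 < eps'" "eps' \<le> 1" "0 < eps"
      "eps \<le> eps' / 2" "eps \<le> d / 4" "1 \<le> k" "0 < xi" "xi \<le> eps * eps' / (360 * real k ^ 3)"
  and G: "simple_graph V E"
  and part: "is_cls_partition k V P"
  and size: "\<forall>i\<in>{1..k}. real (card (P (ACl i))) \<ge> real (card V) / (3 * real k)
                 \<and> real (card (P (BCl i))) \<ge> real (card V) / (3 * real k)"
  and cg: "cls_graph k R"
  and red: "reduced_graph_on eps d E k R P"
  and h1: "\<forall>i\<in>{1..k}. R (ACl i) (BCl i)"
  and h2: "\<forall>i\<in>{1..<k}. R (BCl i) (ACl (i + 1))"
  and h3: "R (BCl k) (ACl 1)"
  and h4: "\<exists>i1\<in>{1..k}. \<exists>j1\<in>{1..k}. i1 \<noteq> j1 \<and> R (ACl i1) (ACl j1)"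
  and h5: "\<exists>i2\<in>{1..k}. \<exists>j2\<in>{1..k}. i2 \<noteq> j2 \<and> R (BCl i2) (BCl j2)"
  and sr: "\<forall>i\<in>{1..k}. super_regular_pair eps d E (P (ACl i)) (P (BCl i))"
  and hv: "\<forall>i\<in>{1..k}. real_of_int \<bar>a i\<bar> < xi * real (card V)
                 \<and> real_of_int \<bar>b i\<bar> < xi * real (card V)"
  and hvi: "(\<Sum>i=1..k. a i) + (\<Sum>i=1..k. b i) = 0"
  shows "\<exists>P'. is_cls_partition k V P' \<and>
         (\<forall>i\<in>{1..k}. int (card (P' (ACl i))) = int (card (P (ACl i))) + a i
                    \<and> int (card (P' (BCl i))) = int (card (P (BCl i))) + b i) \<and>
         reduced_graph_on eps' d' E k R P' \<and>
         (\<forall>i\<in>{1..k}. super_regular_pair eps' d' E (P' (ACl i)) (P' (BCl i)))"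
proof -
  have fin: "finite V" using G unfolding simple_graph_def by blast
  define C where "C = {z. valid_cls k z}"
  have finC: "finite C" unfolding C_def by (rule finite_C)
  have regR: "\<And>c c'. R c c' \<Longrightarrow> regular_pair eps d E (P c) (P c')"
    using red unfolding reduced_graph_on_def by blast
  have validR: "\<And>c c'. R c c' \<Longrightarrow> valid_cls k c \<and> valid_cls k c'"
    using cg unfolding cls_graph_def by blast
  have symR: "\<And>c c'. R c c' \<Longrightarrow> R c' c"
    using cg unfolding cls_graph_def by blast
  have validE: "\<And>c. valid_cls k c \<Longrightarrow> \<exists>i\<in>{1..k}. c = ACl i \<or> c = BCl i"
    by (case_tac c) (auto simp: valid_cls_def)
  have finP: "\<And>c. valid_cls k c \<Longrightarrow> finite (P c)"
    using partition_sub[OF part] fin finite_subset by blast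
  define Good where "Good = (\<lambda>c x. real (card {y\<in>P (partner c). E x y}) \<ge> (d - eps) * real (card (P (partner c))))"
  have base: "\<And>c x. valid_cls k c \<Longrightarrow> x \<in> P c \<Longrightarrow> Good c x"
  proof -
    fix c x assume vc: "valid_cls k c" and xc: "x \<in> P c"
    obtain i where i: "i \<in> {1..k}" "c = ACl i \<or> c = BCl i" using validE[OF vc] by blast
    have srI: "super_regular_pair eps d E (P (ACl i)) (P (BCl i))" using sr i by blast
    have dd: "\<And>m::nat. (d - eps) * real m \<le> d * real m" using par by (intro mult_right_mono) auto
    show "Good c x"
    proof (cases "c = ACl i")
      case True
      hence "real (card {y\<in>P (BCl i). E x y}) \<ge> d * real (card (P (BCl i)))"
        using srI xc unfolding super_regular_pair_def by blast
      thus ?thesis using True dd[of "card (P (BCl i))"] unfolding Good_def by simp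
    next
      case False
      hence cB: "c = BCl i" using i by blast
      hence "real (card {y\<in>P (ACl i). E x y}) \<ge> d * real (card (P (ACl i)))"
        using srI xc unfolding super_regular_pair_def by blast
      thus ?thesis using cB dd[of "card (P (ACl i))"] unfolding Good_def by simp
    qed
  qed
  have pos: "\<And>c. valid_cls k c \<Longrightarrow> card (P c) > 0"
  proof -
    fix c assume vc: "valid_cls k c"
    obtain i where i: "i \<in> {1..k}" "c = ACl i \<or> c = BCl i" using validE[OF vc] by blast
    have "regular_pair eps d E (P (ACl i)) (P (BCl i))" using sr i unfolding super_regular_pair_def by blast
    thus "card (P c) > 0" using regular_pos par(1) i by blast
  qed
  define n where "n = real (card V)"
  have kpos: "real k \<ge> 1" using par by simp
  have lowc: "\<And>c. valid_cls k c \<Longrightarrow> n \<le> 3 * real k * real (card (P c))"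
  proof -
    fix c assume vc: "valid_cls k c"
    obtain i where i: "i \<in> {1..k}" "c = ACl i \<or> c = BCl i" using validE[OF vc] by blast
    have "real (card (P c)) \<ge> n / (3 * real k)" using size i unfolding n_def by blast
    thus "n \<le> 3 * real k * real (card (P c))" using kpos by (simp add: divide_le_eq mult_ac)
  qed
  obtain i1 j1 where ij1: "i1 \<in> {1..k}" "j1 \<in> {1..k}" "R (ACl i1) (ACl j1)" using h4 by blast
  obtain i2 j2 where ij2: "i2 \<in> {1..k}" "j2 \<in> {1..k}" "R (BCl i2) (BCl j2)" using h5 by blast
  define leg where "leg = (\<lambda>p. valid_cls k (fst p) \<and> valid_cls k (snd p) \<and> R (fst p) (partner (snd p)))"
  interpret mg: movegraph k leg i1 j1 i2 j2
  proof
    show "1 \<le> k" using par by simp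
    show "i1 \<in> {1..k}" "j1 \<in> {1..k}" "i2 \<in> {1..k}" "j2 \<in> {1..k}" using ij1 ij2 by auto
    show "leg (ACl (Suc m), ACl m)" if "1 \<le> m" "m < k" for m
      using that h2 symR unfolding leg_def by (auto simp: valid_cls_def)
    show "leg (BCl m, BCl (Suc m))" if "1 \<le> m" "m < k" for m
      using that h2 unfolding leg_def by (auto simp: valid_cls_def)
    show "leg (ACl 1, ACl k)" using h3 symR par(10) unfolding leg_def by (auto simp: valid_cls_def)
    show "leg (BCl k, BCl 1)" using h3 par(10) unfolding leg_def by (auto simp: valid_cls_def)
    show "leg (ACl i1, BCl j1)" using ij1 validR unfolding leg_def by (auto simp: valid_cls_def)
    show "leg (BCl i2, ACl j2)" using ij2 validR unfolding leg_def by (auto simp: valid_cls_def)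
  qed
  define \<delta> where "\<delta> = (\<lambda>z. case z of ACl i \<Rightarrow> a i | BCl i \<Rightarrow> b i)"
  have s\<delta>: "sum \<delta> C = 0" unfolding C_def sumC \<delta>_def using hvi by simp
  have pathC: "\<And>c c'. c \<in> C \<Longrightarrow> c' \<in> C \<Longrightarrow> \<exists>L. (\<forall>p\<in>set L. leg p)
        \<and> (\<forall>z. eff L z = ind c' z - ind c z) \<and> length L \<le> 2 * k + 1"
    unfolding C_def using mg.path by blast
  obtain L where L: "\<forall>p\<in>set L. leg p" "\<forall>z\<in>C. eff L z = \<delta> z"
      "2 * length L \<le> (2 * k + 1) * nat (\<Sum>z\<in>C. \<bar>\<delta> z\<bar>)"
    using realize[OF finC pathC s\<delta>] by blast
  define S where "S = (\<Sum>z\<in>C. \<bar>\<delta> z\<bar>)"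
  have S_eq: "S = (\<Sum>i=1..k. \<bar>a i\<bar>) + (\<Sum>i=1..k. \<bar>b i\<bar>)"
    unfolding S_def C_def sumC \<delta>_def by simp
  have Sa: "real_of_int (\<Sum>i=1..k. \<bar>a i\<bar>) \<le> real k * (xi * n)"
  proof -
    have "real_of_int (\<Sum>i=1..k. \<bar>a i\<bar>) = (\<Sum>i=1..k. real_of_int \<bar>a i\<bar>)" by simp
    also have "\<dots> \<le> (\<Sum>i=1..k. xi * n)" using hv unfolding n_def by (intro sum_mono) (auto intro: less_imp_le)
    finally show ?thesis by simp
  qed
  have Sb: "real_of_int (\<Sum>i=1..k. \<bar>b i\<bar>) \<le> real k * (xi * n)"
  proof -
    have "real_of_int (\<Sum>i=1..k. \<bar>b i\<bar>) = (\<Sum>i=1..k. real_of_int \<bar>b i\<bar>)" by simp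
    also have "\<dots> \<le> (\<Sum>i=1..k. xi * n)" using hv unfolding n_def by (intro sum_mono) (auto intro: less_imp_le)
    finally show ?thesis by simp
  qed
  have S0: "S \<ge> 0" unfolding S_def by (rule sum_nonneg) auto
  have Sr: "real_of_int S \<le> 2 * real k * (xi * n)" using Sa Sb unfolding S_eq by simp
  define N where "N = real (length L)"
  have n0: "n \<ge> 0" unfolding n_def by simp
  have xn0: "xi * n \<ge> 0" using par n0 by simp
  have Nb1: "N \<le> 3 * (real k)^2 * (xi * n)"
  proof -
    have "real (2 * length L) \<le> real ((2 * k + 1) * nat S)" using L(3) unfolding S_def by (simp only: of_nat_le_iff)
    hence "2 * N \<le> (2 * real k + 1) * real_of_int S" using S0 unfolding N_def by (simp add: algebra_simps)
    also have "\<dots> \<le> (2 * real k + 1) * (2 * real k * (xi * n))" using Sr by (intro mult_left_mono) auto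
    also have "\<dots> \<le> (3 * real k) * (2 * real k * (xi * n))" using kpos xn0 by (intro mult_right_mono) auto
    finally show ?thesis by (simp add: power2_eq_square mult_ac)
  qed
  define rho where "rho = eps * eps' / 40"
  have ee: "eps * eps' \<le> eps" using par by (intro mult_left_le) auto
  have rho_d: "rho \<le> d / 160" "16 * rho \<le> d" "rho \<le> 1/80" unfolding rho_def using ee par by linarith+
  have rho0: "rho \<ge> 0" using par unfolding rho_def by simp
  have xk: "9 * real k ^ 3 * xi \<le> rho"
  proof -
    have "xi * (360 * real k ^ 3) \<le> eps * eps'" using par kpos by (simp add: le_divide_eq)
    thus ?thesis unfolding rho_def by (simp add: mult_ac)
  qed
  have Nb: "\<And>c. valid_cls k c \<Longrightarrow> N \<le> rho * real (card (P c))"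
  proof -
    fix c assume vc: "valid_cls k c"
    have "N \<le> 3 * (real k)^2 * (xi * n)" by (rule Nb1)
    also have "\<dots> = (3 * (real k)^2 * xi) * n" by (simp add: mult_ac)
    also have "\<dots> \<le> (3 * (real k)^2 * xi) * (3 * real k * real (card (P c)))"
      using lowc[OF vc] par by (intro mult_left_mono) auto
    also have "\<dots> = (9 * real k ^ 3 * xi) * real (card (P c))" by (simp add: power2_eq_square power3_eq_cube mult_ac)
    also have "\<dots> \<le> rho * real (card (P c))" using xk by (intro mult_right_mono) auto
    finally show "N \<le> rho * real (card (P c))" .
  qed
  have small: "\<And>c. valid_cls k c \<Longrightarrow> 2 * length L \<le> card (P c)"
  proof -
    fix c assume vc: "valid_cls k c"
    have "rho * real (card (P c)) \<le> (1/80) * real (card (P c))" using rho_d by (intro mult_right_mono) auto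
    hence "2 * N \<le> real (card (P c))" using Nb[OF vc] by linarith
    thus "2 * length L \<le> card (P c)" unfolding N_def by linarith
  qed
  have typs: "\<And>s t. (s, t) \<in> set L \<Longrightarrow> valid_cls k s \<and> valid_cls k t
              \<and> 2 * card {x\<in>P s. Good t x} > card (P s)"
  proof -
    fix s t assume st: "(s, t) \<in> set L"
    hence lg: "valid_cls k s" "valid_cls k t" "R s (partner t)" using L(1) unfolding leg_def by auto
    have rg: "regular_pair eps d E (P s) (P (partner t))" using regR[OF lg(3)] .
    define Bad where "Bad = {x\<in>P s. real (card {y\<in>P (partner t). E x y}) < (d - eps) * real (card (P (partner t)))}"
    have bs: "real (card Bad) < eps * real (card (P s))"
      unfolding Bad_def using bad_small[OF rg par(7)] par by simp
    have un: "{x\<in>P s. Good t x} \<union> Bad = P s" "{x\<in>P s. Good t x} \<inter> Bad = {}"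
      unfolding Bad_def Good_def by auto
    have "card ({x\<in>P s. Good t x} \<union> Bad) = card {x\<in>P s. Good t x} + card Bad"
      using finP[OF lg(1)] un by (intro card_Un_disjoint) (auto intro: finite_subset)
    hence cs: "card (P s) = card {x\<in>P s. Good t x} + card Bad" using un by simp
    have "eps * real (card (P s)) \<le> (1/2) * real (card (P s))" using par by (intro mult_right_mono) auto
    hence "2 * real (card Bad) < real (card (P s))" using bs by linarith
    hence "2 * card Bad < card (P s)" by linarith
    thus "valid_cls k s \<and> valid_cls k t \<and> 2 * card {x\<in>P s. Good t x} > card (P s)"
      using lg cs by linarith
  qed
  obtain Q where Q: "is_cls_partition k V Q"
    and QQ: "\<And>c. valid_cls k c \<Longrightarrow> int (card (Q c)) = int (card (P c)) + eff L c \<and> card (P c - Q c) \<le> length L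
      \<and> card (Q c - P c) \<le> length L \<and> (\<forall>x\<in>Q c. Good c x)"
    using moves[OF part fin typs small base] by blast
  have finQ: "\<And>c. valid_cls k c \<Longrightarrow> finite (Q c)"
    using partition_sub[OF Q] fin finite_subset by blast
  have cl: "\<And>c. valid_cls k c \<Longrightarrow> real (card (P c)) \<le> real (card (P c \<inter> Q c)) + N
     \<and> real (card (Q c)) \<le> real (card (P c \<inter> Q c)) + N \<and> real (card (Q c)) \<le> real (card (P c)) + N
     \<and> real (card (P c - Q c)) \<le> N"
  proof -
    fix c assume vc: "valid_cls k c"
    have a1: "card (P c - Q c) \<le> length L" "card (Q c - P c) \<le> length L" using QQ[OF vc] by auto
    show "?thesis c" using closeness[OF finP[OF vc] finQ[OF vc] a1] a1 unfolding N_def by simp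
  qed
  have pert: "\<And>c c'. R c c' \<Longrightarrow> regular_pair eps' d' E (Q c) (Q c')"
  proof -
    fix c c' assume Rc: "R c c'"
    have v: "valid_cls k c" "valid_cls k c'" using validR[OF Rc] by auto
    show "regular_pair eps' d' E (Q c) (Q c')"
    proof (rule perturb[OF regR[OF Rc] par(7) par(8) par(6) par(1) par(4) _ rho_d(2) finQ[OF v(1)] finQ[OF v(2)]])
      show "rho \<le> eps * eps' / 40" unfolding rho_def by simp
      show "P c \<inter> Q c \<subseteq> P c" "P c \<inter> Q c \<subseteq> Q c" "P c' \<inter> Q c' \<subseteq> P c'" "P c' \<inter> Q c' \<subseteq> Q c'" by auto
      show "real (card (P c)) \<le> real (card (P c \<inter> Q c)) + N" "real (card (Q c)) \<le> real (card (P c \<inter> Q c)) + N"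
        using cl[OF v(1)] by auto
      show "real (card (P c')) \<le> real (card (P c' \<inter> Q c')) + N" "real (card (Q c')) \<le> real (card (P c' \<inter> Q c')) + N"
        using cl[OF v(2)] by auto
      show "N \<le> rho * real (card (P c))" "N \<le> rho * real (card (P c'))" using Nb v by auto
    qed
  qed
  have degs: "\<And>c x. valid_cls k c \<Longrightarrow> x \<in> Q c \<Longrightarrow>
      real (card {y\<in>Q (partner c). E x y}) \<ge> d' * real (card (Q (partner c)))"
  proof -
    fix c x assume vc: "valid_cls k c" and xq: "x \<in> Q c"
    have vp: "valid_cls k (partner c)" using vc by (cases c) (auto simp: valid_cls_def)
    have g: "Good c x" using QQ[OF vc] xq by blast
    show "real (card {y\<in>Q (partner c). E x y}) \<ge> d' * real (card (Q (partner c)))"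
      by (rule deg_keep[where E=E and x=x and d=d and eps=eps, OF finP[OF vp] finQ[OF vp] g[unfolded Good_def]])
        (use cl[OF vp] Nb[OF vp] par rho_d in auto)
  qed
  show ?thesis
  proof (intro exI[of _ Q] conjI ballI)
    show "is_cls_partition k V Q" by (rule Q)
    fix i assume i: "i \<in> {1..k}"
    have vA: "valid_cls k (ACl i)" and vB: "valid_cls k (BCl i)" using i by (auto simp: valid_cls_def)
    have CA: "ACl i \<in> C" "BCl i \<in> C" using vA vB unfolding C_def by auto
    show "int (card (Q (ACl i))) = int (card (P (ACl i))) + a i"
      using QQ[OF vA] L(2) CA unfolding \<delta>_def by auto
    show "int (card (Q (BCl i))) = int (card (P (BCl i))) + b i"
      using QQ[OF vB] L(2) CA unfolding \<delta>_def by auto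
  next
    show "reduced_graph_on eps' d' E k R Q" unfolding reduced_graph_on_def using pert by blast
  next
    fix i assume i: "i \<in> {1..k}"
    have vA: "valid_cls k (ACl i)" and vB: "valid_cls k (BCl i)" using i by (auto simp: valid_cls_def)
    show "super_regular_pair eps' d' E (Q (ACl i)) (Q (BCl i))"
      unfolding super_regular_pair_def
      using pert[OF h1[rule_format, OF i]] degs[OF vA] degs[OF vB] by simp
  qed
qed

theorem lemma6p1:
  shows "\<exists>d0>0. \<forall>d. 0 < d \<and> d \<le> d0 \<longrightarrow>
   (\<exists>d'0>0. \<forall>d'. 0 < d' \<and> d' \<le> d'0 \<longrightarrow>
   (\<exists>eps'0>0. \<forall>eps'. 0 < eps' \<and> eps' \<le> eps'0 \<longrightarrow>
   (\<exists>eps0>0. \<forall>eps. 0 < eps \<and> eps \<le> eps0 \<longrightarrow>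
   (\<exists>k0::nat. \<forall>k::nat. k \<ge> k0 \<and> k \<ge> 1 \<longrightarrow>
   (\<exists>xi0>0. \<forall>xi. 0 < xi \<and> xi \<le> xi0 \<longrightarrow>
   (\<forall>(V::nat set) E (R::cls \<Rightarrow> cls \<Rightarrow> bool) (P::cls \<Rightarrow> nat set) (a::nat \<Rightarrow> int) (b::nat \<Rightarrow> int).
      simple_graph V E \<longrightarrow>
      is_cls_partition k V P \<longrightarrow>
      (\<forall>i\<in>{1..k}. real (card (P (ACl i))) \<ge> real (card V) / (3 * real k)
                 \<and> real (card (P (BCl i))) \<ge> real (card V) / (3 * real k)) \<longrightarrow>
      cls_graph k R \<longrightarrow>
      reduced_graph_on eps d E k R P \<longrightarrow>
      \<comment> \<open>(i) Hamilton cycle A_1 B_1 A_2 B_2 ... A_k B_k A_1\<close>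
      (\<forall>i\<in>{1..k}. R (ACl i) (BCl i)) \<longrightarrow>
      (\<forall>i\<in>{1..<k}. R (BCl i) (ACl (i + 1))) \<longrightarrow>
      R (BCl k) (ACl 1) \<longrightarrow>
      \<comment> \<open>(ii), (iii)\<close>
      (\<exists>i1\<in>{1..k}. \<exists>j1\<in>{1..k}. i1 \<noteq> j1 \<and> R (ACl i1) (ACl j1)) \<longrightarrow>
      (\<exists>i2\<in>{1..k}. \<exists>j2\<in>{1..k}. i2 \<noteq> j2 \<and> R (BCl i2) (BCl j2)) \<longrightarrow>
      \<comment> \<open>(iv)\<close>
      (\<forall>i\<in>{1..k}. super_regular_pair eps d E (P (ACl i)) (P (BCl i))) \<longrightarrow>
      \<comment> \<open>(v)\<close>
      (\<forall>i\<in>{1..k}. real_of_int \<bar>a i\<bar> < xi * real (card V)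
                 \<and> real_of_int \<bar>b i\<bar> < xi * real (card V)) \<longrightarrow>
      \<comment> \<open>(vi)\<close>
      (\<Sum>i=1..k. a i) + (\<Sum>i=1..k. b i) = 0 \<longrightarrow>
      \<comment> \<open>(vii)\<close>
      \<bar>\<Sum>i=1..k. a i\<bar> = \<bar>\<Sum>i=1..k. b i\<bar> \<longrightarrow>
      real_of_int \<bar>\<Sum>i=1..k. a i\<bar> \<le> xi * real (card V) \<longrightarrow>
      (\<exists>P'::cls \<Rightarrow> nat set.
         is_cls_partition k V P' \<and>
         (\<forall>i\<in>{1..k}. int (card (P' (ACl i))) = int (card (P (ACl i))) + a i
                    \<and> int (card (P' (BCl i))) = int (card (P (BCl i))) + b i) \<and>
         reduced_graph_on eps' d' E k R P' \<and>
         (\<forall>i\<in>{1..k}. super_regular_pair eps' d' E (P' (ACl i)) (P' (BCl i))))))))))"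
  apply (rule exI[of _ "1::real"])
  apply (intro conjI allI impI)
   apply simp
  apply (rule_tac x="d / 2" in exI)
  apply (intro conjI allI impI)
   apply simp
  apply (rule_tac x="1::real" in exI)
  apply (intro conjI allI impI)
   apply simp
  apply (rule_tac x="min (eps' / 2) (d / 4)" in exI)
  apply (intro conjI allI impI)
   apply simp
  apply (rule_tac x="1::nat" in exI)
  apply (intro allI impI)
  apply (rule_tac x="eps * eps' / (360 * real k ^ 3)" in exI)
  apply (intro conjI allI impI)
   apply simp
  apply (rule_tac d=d and eps=eps and k=k and xi=xi in core)
  apply (assumption | linarith | (simp; fail))+
  done

end
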